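(* The function $f$ is well defined on $(0,\infty)$, differentiable, and satisfies for all $\theta>0$ \[1=4\lambda(\theta)+\exp\big(-f'(\theta)\big).\]
   Context: Define $\lambda:[0,\infty)\to(0,1/4]$ by $\lambda(0)=1/4$ and, for $\theta>0$, $\lambda(\theta)$ is the unique $\lambda\in(0,1/4)$ with $-1+\frac{\operatorname{artanh}(\sqrt{1-4\lambda})}{\sqrt{1-4\lambda}}=\theta$ (this map is a strictly decreasing bijection from $(0,1/4)$ onto $(0,\infty)$). For $\theta>0$ set $f(\theta)=-\ln\lambda(\theta)-2\theta-\theta\ln\big(1-4\lambda(\theta)\big)$. *)

theory Defs
  imports "HOL-Analysis.Analysis"
begin

definition theta_of :: "real \<Rightarrow> real" where
  "theta_of l = -1 + artanh (sqrt (1 - 4*l)) / sqrt (1 - 4*l)"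

text \<open>lambda(0) = 1/4; for theta > 0 the unique l in (0,1/4) with theta_of l = theta.
  (Values for theta < 0 are irrelevant.)\<close>
definition lam :: "real \<Rightarrow> real" where
  "lam \<theta> = (if \<theta> = 0 then 1/4 else (THE l. 0 < l \<and> l < 1/4 \<and> theta_of l = \<theta>))"

definition f :: "real \<Rightarrow> real" where
  "f \<theta> = - ln (lam \<theta>) - 2*\<theta> - \<theta> * ln (1 - 4 * lam \<theta>)"

end

theory Submission
  imports Defs "HOL-Real_Asymp.Real_Asymp"
begin

definition hh :: "real \<Rightarrow> real" where
  "hh s = artanh s / s - 1"

lemma hh_deriv:
  assumes "0 < s" "s < 1"
  shows "(hh has_real_derivative (s - (1 - s^2) * artanh s) / (s^2 * (1 - s^2))) (at s)"
proof -
  have "s^2 < 1" using assms by (simp add: power_less_one_iff)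
  have "(hh has_real_derivative ((1 / (1 - s^2)) * s - artanh s * 1) / (s * s) - 0) (at s)"
    unfolding hh_def[abs_def]
    by (rule derivative_eq_intros refl | use assms in auto)+
  moreover have "((1 / (1 - s^2)) * s - artanh s * 1) / (s * s) - 0
      = (s - (1 - s^2) * artanh s) / (s^2 * (1 - s^2))"
    using assms \<open>s^2 < 1\<close> by (simp add: field_simps power2_eq_square)
  ultimately show ?thesis by simp
qed

lemma phi_der:
  fixes x :: real assumes that: "0 \<le> x" "x < 1"
  defines "\<phi> \<equiv> \<lambda>x. x / (1 - x^2) - artanh x"
  shows "(\<phi> has_real_derivative (2 * x^2 / (1 - x^2)^2)) (at x)"
proof -
  have "x^2 < 1^2" using that by (intro power_strict_mono) auto
  then have x2: "x^2 < 1" by simp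
  have d: "(\<phi> has_real_derivative ((1 * (1 - x^2) - x * (0 - real 2 * x^(2 - Suc 0))) / ((1 - x^2) * (1 - x^2)) - 1/(1 - x^2))) (at x)"
    unfolding \<phi>_def
    by (intro DERIV_diff DERIV_divide DERIV_ident DERIV_const DERIV_pow artanh_real_has_field_derivative) (use x2 that in auto)
  have u: "1 - x^2 \<noteq> 0" using x2 by simp
  have "(1 * (1 - x^2) - x * (0 - real 2 * x^(2 - Suc 0))) / ((1 - x^2) * (1 - x^2)) - 1/(1 - x^2)
      = 2 * x^2 / (1 - x^2)^2"
  proof -
    have e1: "1 * (1 - x^2) - x * (0 - real 2 * x^(2 - Suc 0)) = (1 - x^2) + 2 * x^2"
      by (simp add: power2_eq_square)
    have g: "(u + a) / (u * u) - 1 / u = a / u^2" if "u \<noteq> 0" for u a :: real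
      using that by (simp add: field_simps power2_eq_square)
    show ?thesis unfolding e1 by (rule g[OF u])
  qed
  then show ?thesis using d by simp
qed

lemma phi_pos:
  fixes s :: real
  assumes "0 < s" "s < 1"
  shows "(1 - s^2) * artanh s < s"
proof -
  define \<phi> where "\<phi> x = x / (1 - x^2) - artanh x" for x :: real
  have der: "(\<phi> has_real_derivative (2 * x^2 / (1 - x^2)^2)) (at x)" if "0 \<le> x" "x < 1" for x
    using phi_der[OF that] by (simp add: \<phi>_def[abs_def])
  have "\<phi> 0 < \<phi> s"
  proof (rule DERIV_pos_imp_increasing_open[OF assms(1)])
    fix x assume "0 < x" "x < s"
    then have "x^2 < 1" "x \<noteq> 0" using assms by (auto simp: power_less_one_iff)
    then show "\<exists>y. DERIV \<phi> x :> y \<and> 0 < y" using der[of x] \<open>0<x\<close> \<open>x<s\<close> assms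
      by (intro exI[of _ "2 * x^2 / (1 - x^2)^2"]) auto
  next
    show "continuous_on {0..s} \<phi>"
      apply (intro DERIV_atLeastAtMost_imp_continuous_on)
      subgoal for x using der[of x] assms by auto
      done
  qed
  then have lt: "artanh s < s / (1 - s^2)" by (simp add: \<phi>_def)
  have "s^2 < 1^2" using assms by (intro power_strict_mono) auto
  then have s2: "0 < 1 - s^2" by simp
  have "(1 - s^2) * artanh s < (1 - s^2) * (s / (1 - s^2))"
    by (rule mult_strict_left_mono[OF lt s2])
  also have "\<dots> = s" using s2 by simp
  finally show ?thesis .
qed

lemma hh_deriv_pos:
  fixes s :: real
  assumes "0 < s" "s < 1"
  shows "(s - (1 - s^2) * artanh s) / (s^2 * (1 - s^2)) > 0"
proof -
  have "s^2 < 1^2" using assms by (intro power_strict_mono) auto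
  then have "s^2 < 1" by simp
  then show ?thesis using phi_pos[OF assms] assms by (intro divide_pos_pos) auto
qed

lemma hh_mono:
  assumes "0 < a" "a < b" "b < 1"
  shows "hh a < hh b"
  using assms
  by (intro DERIV_pos_imp_increasing[OF assms(2)])
     (metis hh_deriv hh_deriv_pos less_le_trans le_less_trans)

lemma hh_inj:
  assumes "0 < a" "a < 1" "0 < b" "b < 1" "hh a = hh b"
  shows "a = b"
  using hh_mono[of a b] hh_mono[of b a] assms by (cases a b rule: linorder_cases) auto

lemma hh_cont: "continuous_on {a..b} hh" if "0 < a" "b < 1"
  using that by (intro DERIV_atLeastAtMost_imp_continuous_on) (metis hh_deriv less_le_trans le_less_trans)

lemma hh_lim0: "(hh \<longlongrightarrow> 0) (at_right 0)"
  unfolding hh_def[abs_def] artanh_def by real_asymp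

lemma hh_surj:
  assumes "\<theta> > 0"
  shows "\<exists>s. 0 < s \<and> s < 1 \<and> hh s = \<theta>"
proof -
  have "eventually (\<lambda>s. hh s < \<theta> \<and> s \<in> {0<..<1}) (at_right 0)"
    using order_tendstoD(2)[OF hh_lim0 assms] eventually_at_right_real[of 0 1]
    by (auto elim: eventually_elim2)
  then obtain a where a: "hh a < \<theta>" "0 < a" "a < 1"
    using eventually_happens[of _ "at_right (0::real)"] by auto
  have "eventually (\<lambda>s. artanh s > \<theta> + 1 \<and> s \<in> {0<..<1}) (at_left 1)"
    using artanh_real_at_left_1[unfolded filterlim_at_top_dense, rule_format, of "\<theta>+1"]
      eventually_at_left_real[of 0 1]
    by (auto elim: eventually_elim2)
  then obtain b where b: "artanh b > \<theta> + 1" "0 < b" "b < 1"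
    using eventually_happens[of _ "at_left (1::real)"] by auto
  have "artanh b \<le> artanh b / b" using b assms by (simp add: le_divide_eq)
  then have hb: "hh b > \<theta>" using b unfolding hh_def by linarith
  have "a \<le> b"
  proof (rule ccontr)
    assume "\<not> a \<le> b"
    then have "hh b < hh a" using hh_mono[of b a] a b by auto
    then show False using a hb by linarith
  qed
  then obtain x where "a \<le> x" "x \<le> b" "hh x = \<theta>"
    using IVT'[of hh a \<theta> b] a hb hh_cont[of a b] b by auto
  then show ?thesis using a b by (intro exI[of _ x]) auto
qed

lemma artanh_gt:
  fixes s :: real
  assumes "0 < s" "s < 1"
  shows "s < artanh s"
proof -
  define \<psi> where "\<psi> x = artanh x - x" for x :: real
  have der: "(\<psi> has_real_derivative (1 / (1 - x^2) - 1)) (at x)" if "0 \<le> x" "x < 1" for x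
  proof -
    have "x^2 < 1^2" using that by (intro power_strict_mono) auto
    then have "x^2 < 1" by simp
    show ?thesis unfolding \<psi>_def[abs_def]
      by (rule derivative_eq_intros refl | use that \<open>x^2 < 1\<close> in auto)+
  qed
  have "\<psi> 0 < \<psi> s"
  proof (rule DERIV_pos_imp_increasing_open[OF assms(1)])
    fix x assume "0 < x" "x < s"
    then have "x^2 < 1^2" using assms by (intro power_strict_mono) auto
    then have "x^2 < 1" by simp
    moreover have "0 < x^2" using \<open>0<x\<close> by simp
    ultimately have "1 / (1 - x^2) - 1 > 0" by (simp add: field_simps)
    then show "\<exists>y. DERIV \<psi> x :> y \<and> 0 < y" using der[of x] \<open>0<x\<close> \<open>x<s\<close> assms
      by (intro exI[of _ "1 / (1 - x^2) - 1"]) auto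
  next
    show "continuous_on {0..s} \<psi>"
      apply (intro DERIV_atLeastAtMost_imp_continuous_on)
      subgoal for x using der[of x] assms by auto
      done
  qed
  then show ?thesis by (simp add: \<psi>_def)
qed

lemma hh_pos: "0 < s \<Longrightarrow> s < 1 \<Longrightarrow> 0 < hh s"
  using artanh_gt[of s] by (simp add: hh_def field_simps)

lemma sq_range:
  assumes "0 < l" "l < 1/4"
  shows "0 < sqrt (1 - 4*l) \<and> sqrt (1 - 4*l) < 1"
  using assms by (auto simp: real_sqrt_less_iff)

lemma theta_of_hh: "theta_of l = hh (sqrt (1 - 4*l))"
  by (simp add: theta_of_def hh_def)

lemma ex1:
  assumes "\<theta> > 0"
  shows "\<exists>!l. 0 < l \<and> l < 1/4 \<and> theta_of l = \<theta>"
proof -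
  obtain s where s: "0 < s" "s < 1" "hh s = \<theta>" using hh_surj[OF assms] by auto
  have "s^2 < 1^2" using s by (intro power_strict_mono) auto
  then have s2: "s^2 < 1" by simp
  define l where "l = (1 - s^2)/4"
  have "1 - 4*l = s^2" by (simp add: l_def field_simps)
  then have "sqrt (1 - 4*l) = s" using s by simp
  then have ex: "0 < l \<and> l < 1/4 \<and> theta_of l = \<theta>"
    using s s2 by (auto simp: l_def theta_of_hh)
  show ?thesis
  proof (rule ex1I[of _ l])
    show "0 < l \<and> l < 1/4 \<and> theta_of l = \<theta>" by (rule ex)
  next
    fix l' assume l': "0 < l' \<and> l' < 1/4 \<and> theta_of l' = \<theta>"
    have "sqrt (1 - 4*l') = sqrt (1 - 4*l)"
      using hh_inj[of "sqrt (1 - 4*l')" "sqrt (1 - 4*l)"] sq_range[of l'] sq_range[of l] l' ex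
      by (auto simp: theta_of_hh)
    then show "l' = l" using l' ex by simp
  qed
qed

lemma lam_prop:
  assumes "\<theta> > 0"
  shows "0 < lam \<theta> \<and> lam \<theta> < 1/4 \<and> theta_of (lam \<theta>) = \<theta>"
  using theI'[OF ex1[OF assms]] assms by (simp add: lam_def)

lemma lam_hh:
  assumes "0 < s" "s < 1"
  shows "lam (hh s) = (1 - s^2)/4"
proof -
  have "s^2 < 1^2" using assms by (intro power_strict_mono) auto
  then have s2: "s^2 < 1" by simp
  have p: "hh s > 0" using hh_pos assms by auto
  have "1 - 4*((1 - s^2)/4) = s^2" by (simp add: field_simps)
  then have "sqrt (1 - 4*((1 - s^2)/4)) = s" using assms by simp
  then have "0 < (1 - s^2)/4 \<and> (1 - s^2)/4 < 1/4 \<and> theta_of ((1 - s^2)/4) = hh s"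
    using s2 assms by (auto simp: theta_of_hh)
  then show ?thesis using ex1[OF p] lam_prop[OF p] by metis
qed

lemma alg0: fixes s A u :: real assumes "s \<noteq> 0" "u \<noteq> 0"
  shows "2 * s / u - 2 * ((s - u * A) / (s^2 * u)) - 2 / s * (A / s - 1) = (2 * s^3 - 2 * s + 2 * s * u) / (s^2 * u)"
  using assms by (simp add: field_simps power2_eq_square power3_eq_cube)
lemma alg: fixes s A :: real assumes "s \<noteq> 0" "1 - s^2 \<noteq> 0"
  shows "2 * s / (1 - s^2) - 2 * ((s - (1 - s^2) * A) / (s^2 * (1 - s^2))) - 2 / s * (A / s - 1) = 0"
proof -
  have "2 * s^3 - 2 * s + 2 * s * (1 - s^2) = 0" by (simp add: algebra_simps power3_eq_cube power2_eq_square)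
  then show ?thesis using alg0[OF assms, of A] by simp
qed

lemma F_deriv0:
  fixes hh :: "real \<Rightarrow> real"
  assumes "0 < s" "s < 1" and hd: "(hh has_real_derivative D) (at s)"
  shows "((\<lambda>s. - ln ((1 - s^2)/4) - 2 * hh s - hh s * ln (s^2)) has_real_derivative
           (- (- 2 * s / (1 - s^2)) - 2 * D - (D * ln (s^2) + (2 / s) * hh s))) (at s)"
proof -
  have "s^2 < 1^2" using assms by (intro power_strict_mono) auto
  then have s2: "s^2 < 1" by simp
  have d1: "((\<lambda>s. ln ((1 - s^2)/4)) has_real_derivative (- 2 * s / (1 - s^2))) (at s)"
    using s2 by (auto intro!: derivative_eq_intros simp: field_simps)
  have d2: "((\<lambda>s. ln (s^2)) has_real_derivative (2 / s)) (at s)"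
    using assms by (auto intro!: derivative_eq_intros simp: field_simps power2_eq_square)
  show ?thesis
    by (intro DERIV_diff DERIV_minus DERIV_cmult DERIV_mult d1 d2 hd)
qed

lemma F_deriv:
  fixes s :: real
  assumes "0 < s" "s < 1"
  defines "D \<equiv> (s - (1 - s^2) * artanh s) / (s^2 * (1 - s^2))"
  shows "((\<lambda>s. - ln ((1 - s^2)/4) - 2 * hh s - hh s * ln (s^2)) has_real_derivative
           (- ln (s^2) * D)) (at s)"
proof -
  have "s^2 < 1^2" using assms by (intro power_strict_mono) auto
  then have s2: "s^2 < 1" by simp
  have hd: "(hh has_real_derivative D) (at s)" unfolding D_def by (rule hh_deriv[OF assms(1,2)])
  have eq: "2 * s / (1 - s^2) - 2 * D - 2 / s * hh s = 0"
  proof -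
    have "1 - s^2 \<noteq> 0" "s \<noteq> 0" using s2 assms by auto
    show ?thesis unfolding D_def hh_def by (rule alg) (use s2 assms in auto)
  qed
  have "- (- 2 * s / (1 - s^2)) - 2 * D - (D * ln (s^2) + (2 / s) * hh s)
      = - ln (s^2) * D + (2 * s / (1 - s^2) - 2 * D - 2 / s * hh s)"
    by (simp add: algebra_simps)
  also have "\<dots> = - ln (s^2) * D" using eq by simp
  finally have E: "- (- 2 * s / (1 - s^2)) - 2 * D - (D * ln (s^2) + (2 / s) * hh s) = - ln (s^2) * D" .
  show ?thesis using F_deriv0[OF assms(1,2) hd] unfolding E .
qed

lemma main_part:
  fixes \<theta> :: real
  assumes th: "\<theta> > 0"
  shows "f differentiable (at \<theta>) \<and> 1 = 4 * lam \<theta> + exp (- deriv f \<theta>)"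
proof -
  define \<sigma> where "\<sigma> y = sqrt (1 - 4 * lam y)" for y
  define F where "F s = - ln ((1 - s^2)/4) - 2 * hh s - hh s * ln (s^2)" for s :: real
  have hs: "hh (\<sigma> y) = y" if "y > 0" for y
    using lam_prop[OF that] by (simp add: \<sigma>_def theta_of_hh)
  have srange: "0 < \<sigma> y \<and> \<sigma> y < 1" if "y > 0" for y
    using lam_prop[OF that] sq_range unfolding \<sigma>_def by blast
  have sh: "\<sigma> (hh z) = z" if "0 < z" "z < 1" for z
  proof -
    have "1 - 4 * lam (hh z) = z^2" using lam_hh[OF that] by simp
    then show ?thesis using that by (simp add: \<sigma>_def)
  qed
  have fF: "f y = F (\<sigma> y)" if "y > 0" for y
  proof -
    have l: "0 < lam y" "lam y < 1/4" using lam_prop[OF that] by auto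
    have sq: "(\<sigma> y)^2 = 1 - 4 * lam y" using l by (simp add: \<sigma>_def)
    have "lam y = (1 - (\<sigma> y)^2)/4" using sq by simp
    then show ?thesis unfolding f_def F_def using hs[OF that] sq by simp
  qed
  define s0 where "s0 = \<sigma> \<theta>"
  have s0: "0 < s0" "s0 < 1" using srange[OF th] by (auto simp: s0_def)
  have hs0: "hh s0 = \<theta>" using hs[OF th] by (simp add: s0_def)
  define D where "D = (s0 - (1 - s0^2) * artanh s0) / (s0^2 * (1 - s0^2))"
  have Dpos: "D > 0" unfolding D_def by (rule hh_deriv_pos[OF s0])
  have cont: "isCont \<sigma> \<theta>"
  proof -
    define d where "d = min (s0/2) ((1 - s0)/2)"
    have d: "0 < d" using s0 by (simp add: d_def)
    have zr: "0 < z \<and> z < 1" if "\<bar>z - s0\<bar> \<le> d" for z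
    proof -
      have "\<bar>z - s0\<bar> \<le> s0/2" "\<bar>z - s0\<bar> \<le> (1 - s0)/2" using that by (auto simp: d_def)
      then have z1: "0 < z" using s0 by arith
      have "z - s0 \<le> (1 - s0)/2" using \<open>\<bar>z - s0\<bar> \<le> (1 - s0)/2\<close> by (rule abs_le_D1)
      then have z2: "z < 1" using s0 by (simp add: field_simps)
      show ?thesis using z1 z2 by simp
    qed
    have "isCont \<sigma> (hh s0)"
    proof (rule isCont_inverse_function[where f = hh and g = \<sigma> and x = s0, OF d])
      fix z assume "\<bar>z - s0\<bar> \<le> d"
      then show "\<sigma> (hh z) = z" using zr by (intro sh) auto
    next
      fix z assume "\<bar>z - s0\<bar> \<le> d"
      then have "0 < z" "z < 1" using zr by auto
      then show "isCont hh z" using hh_deriv by (intro DERIV_isCont) blast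
    qed
    then show ?thesis using hs0 by simp
  qed
  have dsig: "(\<sigma> has_real_derivative inverse D) (at \<theta>)"
  proof (rule DERIV_inverse_function[where a = 0 and b = "\<theta> + 1"])
    show "(hh has_real_derivative D) (at (\<sigma> \<theta>))"
      using hh_deriv[OF s0] by (simp add: D_def s0_def)
    show "D \<noteq> 0" using Dpos by simp
    show "0 < \<theta>" "\<theta> < \<theta> + 1" using th by auto
    show "\<And>y. 0 < y \<Longrightarrow> y < \<theta> + 1 \<Longrightarrow> hh (\<sigma> y) = y" using hs by blast
    show "isCont \<sigma> \<theta>" by (rule cont)
  qed
  have dF: "(F has_real_derivative (- ln (s0^2) * D)) (at (\<sigma> \<theta>))"
    unfolding F_def[abs_def] D_def s0_def[symmetric] by (rule F_deriv[OF s0])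
  have "((\<lambda>y. F (\<sigma> y)) has_real_derivative (- ln (s0^2) * D) * inverse D) (at \<theta>)"
    by (rule DERIV_chain2[OF dF dsig])
  moreover have "- ln (s0^2) * D * inverse D = - ln (s0^2)" using Dpos by simp
  ultimately have "((\<lambda>y. F (\<sigma> y)) has_real_derivative - ln (s0^2)) (at \<theta>)"
    by metis
  then have df: "(f has_real_derivative - ln (s0^2)) (at \<theta>)"
    by (rule has_field_derivative_transform_within_open[where S = "{0<..}"])
       (use th fF in auto)
  show ?thesis
  proof
    show "f differentiable (at \<theta>)" using df real_differentiable_def by blast
    have "deriv f \<theta> = - ln (s0^2)" using df by (rule DERIV_imp_deriv)
    then have "exp (- deriv f \<theta>) = s0^2" using s0 by simp
    moreover have "s0^2 = 1 - 4 * lam \<theta>" using lam_prop[OF th] by (simp add: s0_def \<sigma>_def)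
    ultimately show "1 = 4 * lam \<theta> + exp (- deriv f \<theta>)" by simp
  qed
qed

theorem proposition2:
  shows "(\<forall>\<theta>::real. \<theta> > 0 \<longrightarrow> (\<exists>!l. 0 < l \<and> l < 1/4 \<and> theta_of l = \<theta>))
    \<and> (\<forall>\<theta>::real. \<theta> > 0 \<longrightarrow>
          f differentiable (at \<theta>) \<and> 1 = 4 * lam \<theta> + exp (- deriv f \<theta>))"
  using ex1 main_part by blast

end
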